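(* The following are equivalent: (i) There are $T_1\in(0,\infty]$, $c_1>0$ such that $c_1r^{-d}K_0(r)\le\nu_0(r)$ for all $0<r<T_1$. (ii) There are $T_2\in(0,\infty]$, $c_2\in(0,1]$, $\beta_2\in(0,2)$ such that $c_2\lambda^{\beta_2}K_0(\lambda r)\le K_0(r)$ for all $\lambda\le1$, $0<r<T_2$. (iii) There are $T_3\in(0,\infty]$, $c_3\in(0,1]$, $\beta_3\in[0,2)$ such that $c_3\lambda^{d+\beta_3}\nu_0(\lambda r)\le\nu_0(r)$ for all $\lambda\le1$, $0<r<T_3$. Moreover: (i) implies (ii) with $T_2=T_1$, $c_2=1$ and $\beta_2$ depending only on $d,c_1$; (i) implies (iii) with $T_3=T_1$ and $c_3,\beta_3$ depending only on $d,c_1$; (ii) implies (i) with $T_1=(c_2/2)^{1/(2-\beta_2)}T_2$ and $c_1$ depending only on $d,c_2,\beta_2$; (iii) implies (i) with $T_1=T_3$ and $c_1$ depending only on $d,c_3,\beta_3$.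
   Context: $\nu_0\colon[0,\infty)\to[0,\infty]$ is non-increasing with $\int_{\mathbb{R}^d}(1\wedge|x|^2)\nu_0(|x|)dx<\infty$ and $\int_{\mathbb{R}^d}\nu_0(|x|)dx=\infty$ (so $\nu_0(|x|)dx$ is the Lévy measure of a pure-jump isotropic unimodal Lévy process in $\mathbb{R}^d$ which is not compound Poisson). $K_0(r)=r^{-2}\int_{|x|<r}|x|^2\nu_0(|x|)dx$ for $r>0$. *)

theory Defs
  imports "HOL-Analysis.Analysis"
begin

text \<open>Radial profile nu0 of the Levy density nu0(|x|) dx on the Euclidean space 'a
  (dimension d = DIM('a)); values in [0,\<infinity>] are modelled by ennreal.\<close>

definition levy_profile :: "'a::euclidean_space itself \<Rightarrow> (real \<Rightarrow> ennreal) \<Rightarrow> bool" where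
  "levy_profile (_::'a itself) nu \<longleftrightarrow>
     (\<forall>s t. 0 \<le> s \<longrightarrow> s \<le> t \<longrightarrow> nu t \<le> nu s) \<and>
     (\<integral>\<^sup>+ x. ennreal (min 1 (norm x ^ 2)) * nu (norm x) \<partial>(lborel::'a measure)) < \<infinity> \<and>
     (\<integral>\<^sup>+ x. nu (norm x) \<partial>(lborel::'a measure)) = \<infinity>"

definition K0 :: "'a::euclidean_space itself \<Rightarrow> (real \<Rightarrow> ennreal) \<Rightarrow> real \<Rightarrow> ennreal" where
  "K0 (_::'a itself) nu r =
     ennreal (1 / r ^ 2) * (\<integral>\<^sup>+ x \<in> ball (0::'a) r. ennreal (norm x ^ 2) * nu (norm x) \<partial>lborel)"

definition cond_i :: "'a::euclidean_space itself \<Rightarrow> (real \<Rightarrow> ennreal) \<Rightarrow> ereal \<Rightarrow> real \<Rightarrow> bool" where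
  "cond_i A nu T c \<longleftrightarrow>
     (\<forall>r. 0 < r \<and> ereal r < T \<longrightarrow>
        ennreal (c * r powr (- real DIM('a))) * K0 A nu r \<le> nu r)"

definition cond_ii :: "'a::euclidean_space itself \<Rightarrow> (real \<Rightarrow> ennreal) \<Rightarrow> ereal \<Rightarrow> real \<Rightarrow> real \<Rightarrow> bool" where
  "cond_ii A nu T c \<beta> \<longleftrightarrow>
     (\<forall>l r. 0 < l \<and> l \<le> 1 \<and> 0 < r \<and> ereal r < T \<longrightarrow>
        ennreal (c * l powr \<beta>) * K0 A nu (l * r) \<le> K0 A nu r)"

definition cond_iii :: "'a::euclidean_space itself \<Rightarrow> (real \<Rightarrow> ennreal) \<Rightarrow> ereal \<Rightarrow> real \<Rightarrow> real \<Rightarrow> bool" where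
  "cond_iii (_::'a itself) nu T c \<beta> \<longleftrightarrow>
     (\<forall>l r. 0 < l \<and> l \<le> 1 \<and> 0 < r \<and> ereal r < T \<longrightarrow>
        ennreal (c * l powr (real DIM('a) + \<beta>)) * nu (l * r) \<le> nu r)"

end

theory Submission
  imports Defs
begin

definition Iq :: "'a::euclidean_space itself \<Rightarrow> (real \<Rightarrow> ennreal) \<Rightarrow> real \<Rightarrow> ennreal" where
  "Iq (_::'a itself) nu r = (\<integral>\<^sup>+ x \<in> ball (0::'a) r. ennreal (norm x ^ 2) * nu (norm x) \<partial>lborel)"

lemma K0_Iq: "K0 A nu r = ennreal (1 / r ^ 2) * Iq A nu r"
  by (simp add: K0_def Iq_def)

lemma antitone_meas:
  fixes nu :: "real \<Rightarrow> ennreal"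
  assumes mono: "\<And>s t. 0 \<le> s \<Longrightarrow> s \<le> t \<Longrightarrow> nu t \<le> nu s"
  shows "(\<lambda>x::'a::euclidean_space. nu (norm x)) \<in> borel_measurable borel"
proof (rule borel_measurableI_greater)
  fix y
  let ?S = "{t::real. 0 \<le> t \<and> y < nu t}"
  have iv: "is_interval ?S"
    unfolding is_interval_1
  proof (intro ballI allI impI, elim conjE)
    fix a b x assume "a \<in> ?S" "b \<in> ?S" "a \<le> x" "x \<le> b"
    then show "x \<in> ?S" using mono[of x b] by auto
  qed
  have Sb: "?S \<in> sets borel" by (rule real_interval_borel_measurable[OF iv])
  then have "norm -` ?S \<inter> space (borel::'a measure) \<in> sets borel"
    by (intro measurable_sets[OF _ Sb]) measurable
  moreover have "norm -` ?S \<inter> space (borel::'a measure) = {x\<in>space borel. y < nu (norm x)}"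
    by auto
  ultimately show "{x\<in>space borel. y < nu (norm x)} \<in> sets (borel::'a measure)" by simp
qed

lemma g_meas:
  assumes "levy_profile TYPE('a::euclidean_space) nu"
  shows "(\<lambda>x::'a. ennreal (norm x ^ 2) * nu (norm x)) \<in> borel_measurable borel"
proof -
  have [measurable]: "(\<lambda>x::'a. nu (norm x)) \<in> borel_measurable borel"
    using assms by (intro antitone_meas) (auto simp: levy_profile_def)
  show ?thesis by measurable
qed

lemma nu_norm_meas:
  assumes "levy_profile TYPE('a::euclidean_space) nu"
  shows "(\<lambda>x::'a. nu (norm x)) \<in> borel_measurable borel"
  using assms by (intro antitone_meas) (auto simp: levy_profile_def)

lemma Iq_finite:
  assumes "levy_profile TYPE('a::euclidean_space) nu"
  shows "Iq TYPE('a) nu r < \<infinity>"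
proof -
  have [measurable]: "(\<lambda>x::'a. nu (norm x)) \<in> borel_measurable borel"
    using assms by (intro antitone_meas) (auto simp: levy_profile_def)
  have m: "(\<lambda>x::'a. ennreal (min 1 (norm x ^ 2)) * nu (norm x)) \<in> borel_measurable borel"
    by measurable
  have "Iq TYPE('a) nu r \<le> (\<integral>\<^sup>+ x. ennreal (max 1 (r^2)) * (ennreal (min 1 (norm x ^ 2)) * nu (norm x)) \<partial>(lborel::'a measure))"
    unfolding Iq_def
  proof (intro nn_integral_mono)
    fix x :: 'a
    show "ennreal (norm x ^ 2) * nu (norm x) * indicator (ball 0 r) x
          \<le> ennreal (max 1 (r^2)) * (ennreal (min 1 (norm x ^ 2)) * nu (norm x))"
    proof (cases "x \<in> ball 0 r")
      case True
      then have "norm x < r" by simp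
      have "norm x ^ 2 \<le> max 1 (r^2) * min 1 (norm x ^ 2)"
      proof (cases "norm x \<le> 1")
        case True
        then have "norm x ^ 2 \<le> 1" by (simp add: power_le_one)
        then have "min 1 (norm x ^ 2) = norm x ^ 2" by simp
        moreover have "norm x ^ 2 \<le> max 1 (r^2) * norm x ^ 2"
          using mult_right_mono[of 1 "max 1 (r^2)" "norm x^2"] by simp
        ultimately show ?thesis by simp
      next
        case False
        then have "1 \<le> norm x ^ 2" by (simp add: one_le_power)
        then have "min 1 (norm x ^ 2) = 1" by simp
        moreover have "norm x ^ 2 \<le> r ^ 2" using \<open>norm x < r\<close>
          by (intro power_mono) auto
        ultimately show ?thesis by simp
      qed
      then have "ennreal (norm x ^ 2) \<le> ennreal (max 1 (r^2)) * ennreal (min 1 (norm x ^ 2))"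
        by (simp add: ennreal_mult[symmetric])
      then show ?thesis using True by (simp add: mult.assoc[symmetric] mult_right_mono)
    qed simp
  qed
  also have "\<dots> = ennreal (max 1 (r^2)) * (\<integral>\<^sup>+ x. ennreal (min 1 (norm x ^ 2)) * nu (norm x) \<partial>(lborel::'a measure))"
    using m by (intro nn_integral_cmult) simp
  also have "\<dots> < \<infinity>" using assms by (simp add: levy_profile_def ennreal_mult_less_top)
  finally show ?thesis .
qed

lemma antitone_nu:
  assumes "levy_profile TYPE('a::euclidean_space) nu" "0 \<le> s" "s \<le> t"
  shows "nu t \<le> nu s"
  using assms by (auto simp: levy_profile_def)

definition ann :: "'a::euclidean_space itself \<Rightarrow> (real \<Rightarrow> ennreal) \<Rightarrow> real \<Rightarrow> real \<Rightarrow> ennreal" where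
  "ann (_::'a itself) nu s r = (\<integral>\<^sup>+ x \<in> ball (0::'a) r - ball 0 s. ennreal (norm x ^ 2) * nu (norm x) \<partial>lborel)"

lemma Iq_split:
  assumes L: "levy_profile TYPE('a::euclidean_space) nu" and "s \<le> r"
  shows "Iq TYPE('a) nu r = Iq TYPE('a) nu s + ann TYPE('a) nu s r"
proof -
  note gm[measurable] = nu_norm_meas[OF L]
  have [measurable]: "ball (0::'a) s \<in> sets borel" "ball (0::'a) r \<in> sets borel" by auto
  have ind: "indicator (ball (0::'a) r) x = (indicator (ball 0 s) x + indicator (ball 0 r - ball 0 s) x :: ennreal)" for x
    using assms(2) by (auto simp: indicator_def)
  have "Iq TYPE('a) nu r = (\<integral>\<^sup>+ x. ennreal (norm x ^ 2) * nu (norm x) * indicator (ball 0 s) x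
      + ennreal (norm x ^ 2) * nu (norm x) * indicator (ball 0 r - ball 0 s) x \<partial>(lborel::'a measure))"
    unfolding Iq_def by (intro nn_integral_cong) (simp add: ind distrib_left)
  also have "\<dots> = Iq TYPE('a) nu s + ann TYPE('a) nu s r"
    unfolding Iq_def ann_def by (intro nn_integral_add) measurable
  finally show ?thesis .
qed

lemma emeasure_annulus:
  assumes "0 \<le> s" "s \<le> r"
  shows "emeasure lborel (ball (0::'a::euclidean_space) r - ball 0 s)
     = ennreal (unit_ball_vol (real DIM('a)) * r ^ DIM('a) - unit_ball_vol (real DIM('a)) * s ^ DIM('a))"
proof -
  have "ball (0::'a) s \<subseteq> ball 0 r" using assms by auto
  then have "emeasure lborel (ball (0::'a) r - ball 0 s) = emeasure lborel (ball (0::'a) r) - emeasure lborel (ball (0::'a) s)"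
    using emeasure_lborel_ball_finite[of "0::'a" s] by (intro emeasure_Diff) auto
  also have "\<dots> = ennreal (unit_ball_vol (real DIM('a)) * r ^ DIM('a) - unit_ball_vol (real DIM('a)) * s ^ DIM('a))"
    using assms by (simp add: emeasure_ball ennreal_minus)
  finally show ?thesis .
qed

lemma ann_lower:
  assumes L: "levy_profile TYPE('a::euclidean_space) nu" and "0 \<le> s" "s \<le> r"
  shows "ennreal (s^2) * nu r * ennreal (unit_ball_vol (real DIM('a)) * r ^ DIM('a) - unit_ball_vol (real DIM('a)) * s ^ DIM('a))
     \<le> ann TYPE('a) nu s r"
proof -
  have "ennreal (s^2) * nu r * ennreal (unit_ball_vol (real DIM('a)) * r ^ DIM('a) - unit_ball_vol (real DIM('a)) * s ^ DIM('a))
      = (\<integral>\<^sup>+ x. ennreal (s^2) * nu r * indicator (ball (0::'a) r - ball 0 s) x \<partial>lborel)"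
    using assms by (subst nn_integral_cmult_indicator) (auto simp: emeasure_annulus)
  also have "\<dots> \<le> ann TYPE('a) nu s r"
    unfolding ann_def
  proof (intro nn_integral_mono)
    fix x :: 'a
    show "ennreal (s^2) * nu r * indicator (ball 0 r - ball 0 s) x
       \<le> ennreal (norm x ^ 2) * nu (norm x) * indicator (ball 0 r - ball 0 s) x"
    proof (cases "x \<in> ball 0 r - ball 0 s")
      case True
      then have "s \<le> norm x" "norm x < r" by auto
      then have "s^2 \<le> norm x ^ 2" using assms by (intro power_mono) auto
      moreover have "nu r \<le> nu (norm x)" using antitone_nu[OF L, of "norm x" r] \<open>norm x < r\<close> by simp
      ultimately show ?thesis using True by (auto intro!: mult_mono)
    qed simp
  qed
  finally show ?thesis .
qed

lemma ann_upper:
  assumes L: "levy_profile TYPE('a::euclidean_space) nu" and "0 \<le> s" "s \<le> r"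
  shows "ann TYPE('a) nu s r \<le> ennreal (r^2) * nu s * ennreal (unit_ball_vol (real DIM('a)) * r ^ DIM('a))"
proof -
  have "ann TYPE('a) nu s r \<le> (\<integral>\<^sup>+ x. ennreal (r^2) * nu s * indicator (ball (0::'a) r) x \<partial>lborel)"
    unfolding ann_def
  proof (intro nn_integral_mono)
    fix x :: 'a
    show "ennreal (norm x ^ 2) * nu (norm x) * indicator (ball 0 r - ball 0 s) x
       \<le> ennreal (r^2) * nu s * indicator (ball 0 r) x"
    proof (cases "x \<in> ball 0 r - ball 0 s")
      case True
      then have "s \<le> norm x" "norm x < r" by auto
      then have "norm x ^ 2 \<le> r ^ 2" by (intro power_mono) auto
      moreover have "nu (norm x) \<le> nu s" using antitone_nu[OF L, of s "norm x"] \<open>s \<le> norm x\<close> assms by simp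
      ultimately show ?thesis using True by (auto intro!: mult_mono)
    qed simp
  qed
  also have "\<dots> = ennreal (r^2) * nu s * ennreal (unit_ball_vol (real DIM('a)) * r ^ DIM('a))"
    using assms by (subst nn_integral_cmult_indicator) (auto simp: emeasure_ball)
  finally show ?thesis .
qed

lemma ann_le_Iq:
  assumes L: "levy_profile TYPE('a::euclidean_space) nu" and "s \<le> r"
  shows "ann TYPE('a) nu s r \<le> Iq TYPE('a) nu r"
  using Iq_split[OF assms] by simp

lemma ann_finite:
  assumes L: "levy_profile TYPE('a::euclidean_space) nu" and "s \<le> r"
  shows "ann TYPE('a) nu s r < \<infinity>"
  using ann_le_Iq[OF assms] Iq_finite[OF L, of r] by (simp add: le_less_trans)

lemma nu_finite:
  assumes L: "levy_profile TYPE('a::euclidean_space) nu" and t: "0 < t"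
  shows "nu t < \<infinity>"
proof (rule ccontr)
  assume "\<not> nu t < \<infinity>"
  then have top: "nu t = \<infinity>" by (simp add: less_top[symmetric])
  have "(t/2) ^ DIM('a) < t ^ DIM('a)" using t by (intro power_strict_mono) auto
  moreover have "unit_ball_vol (real DIM('a)) > 0" by simp
  ultimately have pos: "0 < unit_ball_vol (real DIM('a)) * t ^ DIM('a) - unit_ball_vol (real DIM('a)) * (t/2) ^ DIM('a)"
    by (simp add: right_diff_distrib[symmetric])
  have "ennreal ((t/2)^2) * nu t * ennreal (unit_ball_vol (real DIM('a)) * t ^ DIM('a) - unit_ball_vol (real DIM('a)) * (t/2) ^ DIM('a))
     \<le> ann TYPE('a) nu (t/2) t" using t by (intro ann_lower[OF L]) auto
  moreover have "ennreal ((t/2)^2) * nu t * ennreal (unit_ball_vol (real DIM('a)) * t ^ DIM('a) - unit_ball_vol (real DIM('a)) * (t/2) ^ DIM('a)) = \<infinity>"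
  proof -
    define D where "D = unit_ball_vol (real DIM('a)) * t ^ DIM('a) - unit_ball_vol (real DIM('a)) * (t/2) ^ DIM('a)"
    have e0: "ennreal D \<noteq> 0" using pos unfolding D_def by (simp only: ennreal_eq_0_iff not_le)
    have e1: "ennreal ((t/2)^2) \<noteq> 0" using t by simp
    have "ennreal ((t/2)^2) * nu t \<noteq> 0" using e1 top by simp
    then have "ennreal ((t/2)^2) * nu t = \<infinity>" using e1 top by (simp add: ennreal_mult_eq_top_iff)
    then show ?thesis using e0 unfolding D_def[symmetric] by (simp add: ennreal_mult_eq_top_iff)
  qed
  ultimately show False using ann_finite[OF L, of "t/2" t] t by simp
qed

lemma real_bundle:
  assumes L: "levy_profile TYPE('a::euclidean_space) nu" and s: "0 < s" "s \<le> r"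
  defines "V \<equiv> unit_ball_vol (real DIM('a))"
  shows "enn2real (Iq TYPE('a) nu r) = enn2real (Iq TYPE('a) nu s) + enn2real (ann TYPE('a) nu s r)"
    "s^2 * enn2real (nu r) * (V * r ^ DIM('a) - V * s ^ DIM('a)) \<le> enn2real (ann TYPE('a) nu s r)"
    "enn2real (ann TYPE('a) nu s r) \<le> r^2 * enn2real (nu s) * (V * r ^ DIM('a))"
proof -
  have fI: "Iq TYPE('a) nu s < \<infinity>" and fA: "ann TYPE('a) nu s r < \<infinity>"
    using Iq_finite[OF L, of s] ann_finite[OF L s(2)] by blast+
  show "enn2real (Iq TYPE('a) nu r) = enn2real (Iq TYPE('a) nu s) + enn2real (ann TYPE('a) nu s r)"
    unfolding Iq_split[OF L s(2)] using fI fA by (intro enn2real_plus) auto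
  have Vp: "V > 0" unfolding V_def by simp
  obtain a where a: "nu r = ennreal a" "0 \<le> a" using nu_finite[OF L, of r] s
    by (cases "nu r") auto
  obtain b where b: "nu s = ennreal b" "0 \<le> b" using nu_finite[OF L, of s] s
    by (cases "nu s") auto
  obtain c where c: "ann TYPE('a) nu s r = ennreal c" "0 \<le> c" using fA
    by (cases "ann TYPE('a) nu s r") auto
  have "s ^ DIM('a) \<le> r ^ DIM('a)" using s by (intro power_mono) auto
  then have d: "0 \<le> V * r ^ DIM('a) - V * s ^ DIM('a)" using Vp by simp
  have "ennreal (s^2) * ennreal a * ennreal (V * r ^ DIM('a) - V * s ^ DIM('a)) \<le> ennreal c"
    using ann_lower[OF L, of s r] s a c unfolding V_def by simp
  then have "ennreal (s^2 * a * (V * r ^ DIM('a) - V * s ^ DIM('a))) \<le> ennreal c"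
    using a(2) d by (simp add: ennreal_mult')
  then have "s^2 * a * (V * r ^ DIM('a) - V * s ^ DIM('a)) \<le> c" using c(2) by (simp only: ennreal_le_iff)
  then show "s^2 * enn2real (nu r) * (V * r ^ DIM('a) - V * s ^ DIM('a)) \<le> enn2real (ann TYPE('a) nu s r)"
    using a c by simp
  have "ennreal c \<le> ennreal (r^2) * ennreal b * ennreal (V * r ^ DIM('a))"
    using ann_upper[OF L, of s r] s b c unfolding V_def by simp
  then have "ennreal c \<le> ennreal (r^2 * b * (V * r ^ DIM('a)))"
    using b(2) Vp s by (simp add: ennreal_mult')
  moreover have "0 \<le> r^2 * b * (V * r ^ DIM('a))" using b(2) Vp s by simp
  ultimately have "c \<le> r^2 * b * (V * r ^ DIM('a))" by (simp only: ennreal_le_iff)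
  then show "enn2real (ann TYPE('a) nu s r) \<le> r^2 * enn2real (nu s) * (V * r ^ DIM('a))"
    using b c by simp
qed

lemma pow_ineq:
  fixes a \<mu> :: real and d :: nat
  assumes a: "a > 0" and m: "1/2 \<le> \<mu>" "\<mu> \<le> 1" and d: "d \<ge> 1"
  shows "1 - a * \<mu>^2 * (1 - \<mu>^d) \<le> \<mu> powr (min 1 (a/8))"
proof -
  define \<alpha> where "\<alpha> = min 1 (a/8)"
  have \<alpha>: "0 < \<alpha>" "2 * \<alpha> \<le> a/4" using a unfolding \<alpha>_def by auto
  have mpos: "\<mu> > 0" using m by simp
  have "ln (1/\<mu>) \<le> 1/\<mu> - 1" using mpos by (intro ln_le_minus_one) simp
  then have ln1: "ln \<mu> \<ge> 1 - 1/\<mu>" using mpos by (simp add: ln_div)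
  have h: "(1 - \<mu>) * (2 * \<mu> - 1) \<ge> 0" using m by (intro mult_nonneg_nonneg) auto
  have "1 - 1/\<mu> = (\<mu> - 1) / \<mu>" using mpos by (simp add: field_simps)
  also have "\<dots> \<ge> -2 * (1 - \<mu>)" using mpos h by (simp add: field_simps algebra_simps)
  finally have "1 - 1/\<mu> \<ge> -2 * (1 - \<mu>)" .
  with ln1 have ln2: "ln \<mu> \<ge> -2 * (1 - \<mu>)" by linarith
  have "\<mu> powr \<alpha> = exp (\<alpha> * ln \<mu>)" using mpos by (simp add: powr_def)
  also have "\<dots> \<ge> 1 + \<alpha> * ln \<mu>" by (rule exp_ge_add_one_self)
  finally have p1: "\<mu> powr \<alpha> \<ge> 1 + \<alpha> * ln \<mu>" .
  have "\<alpha> * ln \<mu> \<ge> \<alpha> * (-2 * (1 - \<mu>))" using ln2 \<alpha> by (intro mult_left_mono) auto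
  then have p2: "\<mu> powr \<alpha> \<ge> 1 - 2 * \<alpha> * (1 - \<mu>)" using p1 by linarith
  have "\<mu>^d \<le> \<mu>^1" using m d by (intro power_decreasing) auto
  then have q1: "1 - \<mu>^d \<ge> 1 - \<mu>" by simp
  have q2: "\<mu>^2 \<ge> 1/4" using power_mono[OF m(1), of 2] by (simp add: power2_eq_square)
  have "a * \<mu>^2 * (1 - \<mu>^d) \<ge> a * (1/4) * (1 - \<mu>)"
    using q1 q2 a m by (intro mult_mono) auto
  moreover have "2 * \<alpha> * (1 - \<mu>) \<le> a/4 * (1 - \<mu>)" using \<alpha> m by (intro mult_right_mono) auto
  ultimately have "1 - a * \<mu>^2 * (1 - \<mu>^d) \<le> \<mu> powr \<alpha>" using p2 by linarith
  then show ?thesis unfolding \<alpha>_def .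
qed

lemma cond_i_real:
  assumes L: "levy_profile TYPE('a::euclidean_space) nu" and C: "cond_i TYPE('a) nu T c"
    and c: "c > 0" and r: "0 < r" "ereal r < T"
  shows "c * r powr (- real DIM('a)) * (enn2real (Iq TYPE('a) nu r) / r^2) \<le> enn2real (nu r)"
proof -
  obtain a where a: "nu r = ennreal a" "0 \<le> a" using nu_finite[OF L r(1)] by (cases "nu r") auto
  obtain b where b: "Iq TYPE('a) nu r = ennreal b" "0 \<le> b" using Iq_finite[OF L, of r] by (cases "Iq TYPE('a) nu r") auto
  have "ennreal (c * r powr (- real DIM('a))) * K0 TYPE('a) nu r \<le> nu r"
    using C r unfolding cond_i_def by simp
  then have "ennreal (c * r powr (- real DIM('a))) * (ennreal (1 / r^2) * ennreal b) \<le> ennreal a"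
    unfolding K0_Iq b(1) a(1) .
  then have "ennreal (c * r powr (- real DIM('a)) * (b / r^2)) \<le> ennreal a"
    using c r b(2) by (simp add: ennreal_mult'[symmetric] )
  then have "c * r powr (- real DIM('a)) * (b / r^2) \<le> a" using a(2) by (simp only: ennreal_le_iff)
  then show ?thesis using a b by simp
qed

lemma Iq_nonneg_real: "0 \<le> enn2real (Iq A nu r)" by simp

lemma i_base:
  assumes L: "levy_profile TYPE('a::euclidean_space) nu" and C: "cond_i TYPE('a) nu T c"
    and c: "c > 0" and m: "1/2 \<le> \<mu>" "\<mu> \<le> 1" and r: "0 < r" "ereal r < T"
  shows "enn2real (Iq TYPE('a) nu (\<mu> * r)) \<le> \<mu> powr (min 1 (unit_ball_vol (real DIM('a)) * c / 8)) * enn2real (Iq TYPE('a) nu r)"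
proof -
  define V where "V = unit_ball_vol (real DIM('a))"
  define d where "d = DIM('a)"
  define ir where "ir = enn2real (Iq TYPE('a) nu r)"
  define is0 where "is0 = enn2real (Iq TYPE('a) nu (\<mu> * r))"
  define A where "A = enn2real (ann TYPE('a) nu (\<mu> * r) r)"
  define n where "n = enn2real (nu r)"
  have Vp: "V > 0" unfolding V_def by simp
  have d1: "d \<ge> 1" unfolding d_def by (simp add: DIM_positive Suc_le_eq)
  have mr: "0 < \<mu> * r" "\<mu> * r \<le> r" using m r by (auto simp: mult_le_cancel_right1)
  have e1: "ir = is0 + A" using real_bundle(1)[OF L mr] unfolding ir_def is0_def A_def .
  have e2: "(\<mu> * r)^2 * n * (V * r ^ d - V * (\<mu> * r) ^ d) \<le> A"
    using real_bundle(2)[OF L mr] unfolding A_def n_def V_def d_def .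
  have ci: "c * r powr (- real d) * (ir / r^2) \<le> n"
    using cond_i_real[OF L C c r] unfolding ir_def n_def d_def .
  have rp: "r powr (- real d) = 1 / r ^ d" using r by (simp add: powr_minus powr_realpow divide_inverse)
  have P: "V * r ^ d - V * (\<mu> * r) ^ d = V * r ^ d * (1 - \<mu> ^ d)" by (simp add: power_mult_distrib algebra_simps)
  have "\<mu> ^ d \<le> 1" using m by (simp add: power_le_one)
  then have Pn: "0 \<le> V * r ^ d - V * (\<mu> * r) ^ d" unfolding P using Vp r by simp
  have "(\<mu> * r)^2 * (c * r powr (- real d) * (ir / r^2)) * (V * r ^ d - V * (\<mu> * r) ^ d)
      \<le> (\<mu> * r)^2 * n * (V * r ^ d - V * (\<mu> * r) ^ d)"
    using ci Pn by (intro mult_right_mono mult_left_mono) auto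
  moreover have "(\<mu> * r)^2 * (c * r powr (- real d) * (ir / r^2)) * (V * r ^ d - V * (\<mu> * r) ^ d)
      = (V * c) * \<mu>^2 * (1 - \<mu>^d) * ir"
    unfolding rp P using r by (simp add: field_simps power_mult_distrib)
  ultimately have "(V * c) * \<mu>^2 * (1 - \<mu>^d) * ir \<le> A" using e2 by linarith
  then have "is0 \<le> (1 - (V * c) * \<mu>^2 * (1 - \<mu>^d)) * ir" using e1 by (simp add: algebra_simps)
  also have "\<dots> \<le> \<mu> powr (min 1 ((V * c) / 8)) * ir"
    using pow_ineq[of "V * c" \<mu> d] Vp c m d1 unfolding ir_def by (intro mult_right_mono) auto
  finally show ?thesis unfolding is0_def ir_def V_def by simp
qed

lemma i_iter:
  assumes L: "levy_profile TYPE('a::euclidean_space) nu" and C: "cond_i TYPE('a) nu T c"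
    and c: "c > 0"
  defines "\<alpha> \<equiv> min 1 (unit_ball_vol (real DIM('a)) * c / 8)"
  shows "(1/2)^k \<le> l \<Longrightarrow> l \<le> 1 \<Longrightarrow> 0 < r \<Longrightarrow> ereal r < T \<Longrightarrow>
    enn2real (Iq TYPE('a) nu (l * r)) \<le> l powr \<alpha> * enn2real (Iq TYPE('a) nu r)"
proof (induction k arbitrary: l r)
  case 0
  then show ?case using i_base[OF L C c, of l r] unfolding \<alpha>_def by simp
next
  case (Suc k)
  show ?case
  proof (cases "1/2 \<le> l")
    case True
    then show ?thesis using i_base[OF L C c, of l r] Suc.prems unfolding \<alpha>_def by simp
  next
    case False
    have lp: "0 < l" using Suc.prems(1) by (rule less_le_trans[rotated]) simp
    have r2: "0 < r/2" "ereal (r/2) < T" using Suc.prems by (auto intro: le_less_trans[rotated])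
    have "(1/2)^k \<le> 2 * l" using Suc.prems(1) by simp
    then have h1: "enn2real (Iq TYPE('a) nu ((2*l) * (r/2))) \<le> (2*l) powr \<alpha> * enn2real (Iq TYPE('a) nu (r/2))"
      using Suc.IH[of "2*l" "r/2"] False r2 by simp
    have h2: "enn2real (Iq TYPE('a) nu ((1/2) * r)) \<le> (1/2) powr \<alpha> * enn2real (Iq TYPE('a) nu r)"
      using i_base[OF L C c, of "1/2" r] Suc.prems unfolding \<alpha>_def by simp
    have "enn2real (Iq TYPE('a) nu (l * r)) \<le> (2*l) powr \<alpha> * enn2real (Iq TYPE('a) nu (r/2))"
      using h1 by simp
    also have "\<dots> \<le> (2*l) powr \<alpha> * ((1/2) powr \<alpha> * enn2real (Iq TYPE('a) nu r))"
      using h2 by (intro mult_left_mono) auto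
    also have "\<dots> = ((2*l) * (1/2)) powr \<alpha> * enn2real (Iq TYPE('a) nu r)"
    proof -
      have "((2*l) * (1/2)) powr \<alpha> = (2*l) powr \<alpha> * (1/2) powr \<alpha>" using lp powr_mult[of "2*l" "1/2" \<alpha>] by simp
      then show ?thesis by (simp only: mult.assoc)
    qed
    finally show ?thesis by simp
  qed
qed

lemma i_all:
  assumes L: "levy_profile TYPE('a::euclidean_space) nu" and C: "cond_i TYPE('a) nu T c"
    and c: "c > 0" and l: "0 < l" "l \<le> 1" and r: "0 < r" "ereal r < T"
  shows "enn2real (Iq TYPE('a) nu (l * r)) \<le> l powr (min 1 (unit_ball_vol (real DIM('a)) * c / 8)) * enn2real (Iq TYPE('a) nu r)"
proof -
  obtain k where "(1/2::real)^k < l" using real_arch_pow_inv[of l "1/2"] l by auto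
  then show ?thesis using i_iter[OF L C c, of k l r] l r by simp
qed

lemma K0_real:
  assumes L: "levy_profile TYPE('a::euclidean_space) nu"
  shows "K0 TYPE('a) nu r = ennreal (enn2real (Iq TYPE('a) nu r) / r^2)"
proof -
  have "Iq TYPE('a) nu r = ennreal (enn2real (Iq TYPE('a) nu r))" using Iq_finite[OF L, of r] by simp
  then have "K0 TYPE('a) nu r = ennreal (1 / r^2) * ennreal (enn2real (Iq TYPE('a) nu r))"
    unfolding K0_Iq by metis
  also have "\<dots> = ennreal (enn2real (Iq TYPE('a) nu r) / r^2)"
    by (simp add: ennreal_mult'[symmetric])
  finally show ?thesis .
qed

lemma nu_real:
  assumes L: "levy_profile TYPE('a::euclidean_space) nu" and "0 < r"
  shows "nu r = ennreal (enn2real (nu r))"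
  using nu_finite[OF assms] by simp

lemma part2:
  assumes c: "c1 > (0::real)"
  shows "\<exists>\<beta>2. 0 < \<beta>2 \<and> \<beta>2 < 2 \<and>
      (\<forall>nu T1. levy_profile TYPE('a::euclidean_space) nu \<longrightarrow> T1 > 0 \<longrightarrow> cond_i TYPE('a) nu T1 c1 \<longrightarrow>
         cond_ii TYPE('a) nu T1 1 \<beta>2)"
proof -
  define \<alpha> where "\<alpha> = min 1 (unit_ball_vol (real DIM('a)) * c1 / 8)"
  have \<alpha>: "0 < \<alpha>" "\<alpha> \<le> 1" unfolding \<alpha>_def using c by auto
  show ?thesis
  proof (intro exI[of _ "2 - \<alpha>"] conjI allI impI)
    show "0 < 2 - \<alpha>" "2 - \<alpha> < 2" using \<alpha> by auto
    fix nu T1 assume L: "levy_profile TYPE('a) nu" and T: "T1 > 0" and C: "cond_i TYPE('a) nu T1 c1"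
    show "cond_ii TYPE('a) nu T1 1 (2 - \<alpha>)"
      unfolding cond_ii_def
    proof (intro allI impI, elim conjE)
      fix l r :: real assume l: "0 < l" "l \<le> 1" and r: "0 < r" "ereal r < T1"
      define ir where "ir = enn2real (Iq TYPE('a) nu r)"
      define il where "il = enn2real (Iq TYPE('a) nu (l * r))"
      have h: "il \<le> l powr \<alpha> * ir" using i_all[OF L C c l r] unfolding il_def ir_def \<alpha>_def .
      have il0: "0 \<le> il" unfolding il_def by simp
      have "l powr (2 - \<alpha>) * (il / (l * r)^2) \<le> l powr (2 - \<alpha>) * (l powr \<alpha> * ir / (l * r)^2)"
        using h l r by (intro mult_left_mono divide_right_mono) auto
      also have "\<dots> = (l powr (2 - \<alpha>) * l powr \<alpha>) * ir / (l * r)^2" by simp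
      also have "l powr (2 - \<alpha>) * l powr \<alpha> = l ^ 2"
        using l by (simp add: powr_add[symmetric] powr_realpow)
      also have "l ^ 2 * ir / (l * r)^2 = ir / r^2" using l by (simp add: power_mult_distrib)
      finally have "l powr (2 - \<alpha>) * (il / (l * r)^2) \<le> ir / r^2" .
      then have "ennreal (l powr (2 - \<alpha>) * (il / (l * r)^2)) \<le> ennreal (ir / r^2)"
        by (rule ennreal_leI)
      then show "ennreal (1 * l powr (2 - \<alpha>)) * K0 TYPE('a) nu (l * r) \<le> K0 TYPE('a) nu r"
        unfolding K0_real[OF L] il_def[symmetric] ir_def[symmetric]
        using il0 by (simp add: ennreal_mult'[symmetric])
    qed
  qed
qed

lemma nu_upper:
  assumes L: "levy_profile TYPE('a::euclidean_space) nu" and s: "0 < s"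
  shows "unit_ball_vol (real DIM('a)) * s ^ (DIM('a) + 2) * enn2real (nu s) \<le> 8 * enn2real (Iq TYPE('a) nu s)"
proof -
  define V where "V = unit_ball_vol (real DIM('a))"
  define d where "d = DIM('a)"
  define n where "n = enn2real (nu s)"
  have Vp: "V > 0" unfolding V_def by simp
  have n0: "n \<ge> 0" unfolding n_def by simp
  have d1: "d \<ge> 1" unfolding d_def by (simp add: DIM_positive Suc_le_eq)
  have ss: "0 < s/2" "s/2 \<le> s" using s by auto
  note e1 = real_bundle(1)[OF L ss]
  have e2: "(s/2)^2 * n * (V * s ^ d - V * (s/2) ^ d) \<le> enn2real (ann TYPE('a) nu (s/2) s)"
    using real_bundle(2)[OF L ss] unfolding n_def V_def d_def .
  have "(1/2::real)^d \<le> (1/2)^1" using d1 by (intro power_decreasing) auto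
  then have "V * s ^ d - V * (s/2) ^ d \<ge> V * s ^ d / 2"
    using Vp s by (simp add: power_divide field_simps)
  then have i1: "(s/2)^2 * n * (V * s ^ d / 2) \<le> (s/2)^2 * n * (V * s ^ d - V * (s/2) ^ d)"
    using n0 by (intro mult_left_mono) auto
  have i2: "(s/2)^2 * n * (V * s ^ d / 2) = V * s ^ (d + 2) * n / 8"
    by (simp add: power_add power2_eq_square field_simps)
  have i3: "0 \<le> enn2real (Iq TYPE('a) nu (s/2))" by simp
  have "V * s ^ (d + 2) * n / 8 \<le> enn2real (Iq TYPE('a) nu s)"
    using e1 e2 i1 i2 i3 by linarith
  then show ?thesis unfolding V_def d_def n_def by simp
qed

lemma nu_real_le:
  assumes L: "levy_profile TYPE('a::euclidean_space) nu" and "0 < r" "0 < t"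
    and "c * enn2real (nu t) \<le> enn2real (nu r)" "0 \<le> c"
  shows "ennreal c * nu t \<le> nu r"
proof -
  have "ennreal (c * enn2real (nu t)) \<le> ennreal (enn2real (nu r))" using assms(4) by (rule ennreal_leI)
  then show ?thesis using nu_real[OF L assms(2)] nu_real[OF L assms(3)] assms(5)
    by (metis ennreal_mult' enn2real_nonneg)
qed

lemma part3:
  assumes c: "c1 > (0::real)"
  shows "\<exists>c3 \<beta>3. 0 < c3 \<and> c3 \<le> 1 \<and> 0 \<le> \<beta>3 \<and> \<beta>3 < 2 \<and>
      (\<forall>nu T1. levy_profile TYPE('a::euclidean_space) nu \<longrightarrow> T1 > 0 \<longrightarrow> cond_i TYPE('a) nu T1 c1 \<longrightarrow>
         cond_iii TYPE('a) nu T1 c3 \<beta>3)"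
proof -
  define V where "V = unit_ball_vol (real DIM('a))"
  define d where "d = DIM('a)"
  define \<alpha> where "\<alpha> = min 1 (V * c1 / 8)"
  define c3 where "c3 = min 1 (V * c1 / 8)"
  have Vp: "V > 0" unfolding V_def by simp
  have \<alpha>: "0 < \<alpha>" "\<alpha> \<le> 1" unfolding \<alpha>_def using c Vp by auto
  have c3: "0 < c3" "c3 \<le> 1" "c3 \<le> V * c1 / 8" unfolding c3_def using c Vp by auto
  have main: "\<forall>nu T1. levy_profile TYPE('a) nu \<longrightarrow> T1 > 0 \<longrightarrow> cond_i TYPE('a) nu T1 c1 \<longrightarrow>
         cond_iii TYPE('a) nu T1 c3 (2 - \<alpha>)"
  proof (intro allI impI)
    fix nu T1 assume L: "levy_profile TYPE('a) nu" and T: "T1 > 0" and C: "cond_i TYPE('a) nu T1 c1"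
    show "cond_iii TYPE('a) nu T1 c3 (2 - \<alpha>)"
      unfolding cond_iii_def
    proof (intro allI impI, elim conjE)
      fix l r :: real assume l: "0 < l" "l \<le> 1" and r: "0 < r" "ereal r < T1"
      define ir where "ir = enn2real (Iq TYPE('a) nu r)"
      define il where "il = enn2real (Iq TYPE('a) nu (l * r))"
      define nr where "nr = enn2real (nu r)"
      define nl where "nl = enn2real (nu (l * r))"
      define P where "P = l powr (real d + (2 - \<alpha>))"
      define Q where "Q = l powr \<alpha>"
      have nl0: "0 \<le> nl" unfolding nl_def by simp
      have Pp: "P > 0" "Q > 0" unfolding P_def Q_def using l by auto
      have "P * Q = l powr (real d + 2)" unfolding P_def Q_def by (simp add: powr_add[symmetric])
      also have "\<dots> = l powr (real (d + 2))" by (simp add: add.commute)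
      also have "\<dots> = l ^ (d + 2)" using l by (intro powr_realpow) auto
      finally have PQ: "P * Q = l ^ (d + 2)" .
      have h: "il \<le> Q * ir" using i_all[OF L C c l r] unfolding il_def ir_def Q_def \<alpha>_def V_def .
      have u: "V * (l * r) ^ (d + 2) * nl \<le> 8 * il"
        using nu_upper[OF L, of "l * r"] l r unfolding V_def d_def nl_def il_def by simp
      have ci: "c1 * r powr (- real d) * (ir / r^2) \<le> nr"
        using cond_i_real[OF L C c r] unfolding ir_def nr_def d_def .
      have rp: "r powr (- real d) = 1 / r ^ d" using r by (simp add: powr_minus powr_realpow divide_inverse)
      have "c1 * r powr (- real d) * (ir / r^2) = c1 * ir / r ^ (d + 2)"
        unfolding rp by (simp add: power_add power2_eq_square)
      with ci have "c1 * ir / r ^ (d + 2) \<le> nr" by simp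
      then have ci2: "c1 * ir \<le> nr * r ^ (d + 2)" using r by (subst (asm) pos_divide_le_eq) auto
      have "c1 * (V * (l * r) ^ (d + 2) * nl) \<le> c1 * (8 * il)" using u c by simp
      also have "\<dots> \<le> c1 * (8 * (Q * ir))" using h c by simp
      also have "\<dots> = 8 * Q * (c1 * ir)" by simp
      also have "\<dots> \<le> 8 * Q * (nr * r ^ (d + 2))" using ci2 Pp by (intro mult_left_mono) auto
      finally have ff: "c1 * (V * (l * r) ^ (d + 2) * nl) \<le> 8 * Q * (nr * r ^ (d + 2))" .
      have eqL: "c1 * (V * (l * r) ^ (d + 2) * nl) = r ^ (d + 2) * (c1 * V * P * Q * nl)"
        by (simp only: power_mult_distrib PQ[symmetric]) (simp add: algebra_simps)
      have eqR: "8 * Q * (nr * r ^ (d + 2)) = r ^ (d + 2) * (8 * Q * nr)" by (simp add: algebra_simps)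
      have "r ^ (d + 2) * (c1 * V * P * Q * nl) \<le> r ^ (d + 2) * (8 * Q * nr)"
        using ff unfolding eqL eqR .
      then have "c1 * V * P * Q * nl \<le> 8 * Q * nr" using r by (simp add: mult_le_cancel_left_pos)
      then have "Q * (c1 * V * P * nl) \<le> Q * (8 * nr)" by (simp add: algebra_simps)
      then have "c1 * V * P * nl \<le> 8 * nr" using Pp by (simp add: mult_le_cancel_left_pos)
      moreover have "c3 * P * nl \<le> (V * c1 / 8) * P * nl" using c3 Pp nl0 by (intro mult_right_mono) auto
      moreover have "(V * c1 / 8) * P * nl = (c1 * V * P * nl) / 8" by simp
      ultimately have "c3 * P * nl \<le> nr" by linarith
      then have "(c3 * P) * nl \<le> nr" by simp
      then show "ennreal (c3 * l powr (real DIM('a) + (2 - \<alpha>))) * nu (l * r) \<le> nu r"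
        unfolding P_def d_def nl_def nr_def
        using nu_real_le[OF L r(1), of "l * r" "c3 * l powr (real DIM('a) + (2 - \<alpha>))"] l r c3 by simp
    qed
  qed
  show ?thesis using main c3 \<alpha> by (intro exI[of _ c3] exI[of _ "2 - \<alpha>"]) auto
qed

lemma cond_i_from_real:
  assumes L: "levy_profile TYPE('a::euclidean_space) nu" and r: "0 < r" and c: "0 \<le> c"
    and h: "c * r powr (- real DIM('a)) * (enn2real (Iq TYPE('a) nu r) / r^2) \<le> enn2real (nu r)"
  shows "ennreal (c * r powr (- real DIM('a))) * K0 TYPE('a) nu r \<le> nu r"
proof -
  have "ennreal (c * r powr (- real DIM('a)) * (enn2real (Iq TYPE('a) nu r) / r^2)) \<le> ennreal (enn2real (nu r))"
    using h by (rule ennreal_leI)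
  then show ?thesis unfolding K0_real[OF L] using nu_real[OF L r] c
    by (metis ennreal_mult' enn2real_nonneg divide_nonneg_nonneg zero_le_power2 mult_nonneg_nonneg powr_ge_zero)
qed

lemma rho_facts:
  fixes c \<beta> :: real
  assumes c: "0 < c" "c \<le> 1" and b: "\<beta> < 2"
  defines "\<rho> \<equiv> (c / 2) powr (1 / (2 - \<beta>))"
  shows "0 < \<rho>" "\<rho> < 1" "\<rho> powr (2 - \<beta>) = c / 2"
proof -
  show "0 < \<rho>" unfolding \<rho>_def using c by simp
  have "(c/2) powr (1 / (2 - \<beta>)) < 1 powr (1 / (2 - \<beta>))"
    using c b by (intro powr_less_mono2) auto
  then show "\<rho> < 1" unfolding \<rho>_def by simp
  show "\<rho> powr (2 - \<beta>) = c / 2" unfolding \<rho>_def powr_powr using b c by simp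
qed

lemma ereal_lt_div:
  assumes "0 < \<rho>" "0 < T" "ereal r < ereal \<rho> * T"
  shows "ereal (r / \<rho>) < T"
proof (cases T)
  case (real t)
  then have "r < \<rho> * t" using assms by simp
  then show ?thesis using real assms(1) by (simp add: divide_less_eq mult.commute)
next
  case PInf then show ?thesis by simp
next
  case MInf then show ?thesis using assms by simp
qed

lemma part4:
  assumes c2: "0 < c2" "c2 \<le> 1" and b: "0 < \<beta>2" "\<beta>2 < 2"
  shows "\<exists>c1 > 0. (\<forall>nu T2. levy_profile TYPE('a::euclidean_space) nu \<longrightarrow> T2 > 0 \<longrightarrow> cond_ii TYPE('a) nu T2 c2 \<beta>2 \<longrightarrow>
         cond_i TYPE('a) nu (ereal ((c2 / 2) powr (1 / (2 - \<beta>2))) * T2) c1)"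
proof -
  define \<rho> where "\<rho> = (c2 / 2) powr (1 / (2 - \<beta>2))"
  define V where "V = unit_ball_vol (real DIM('a))"
  define d where "d = DIM('a)"
  have \<rho>: "0 < \<rho>" "\<rho> < 1" "\<rho> powr (2 - \<beta>2) = c2 / 2"
    using rho_facts[OF c2, of \<beta>2] b unfolding \<rho>_def by auto
  have Vp: "V > 0" unfolding V_def by simp
  define c1 where "c1 = \<rho> ^ (d + 2) / V"
  have c1: "c1 > 0" unfolding c1_def using \<rho> Vp by simp
  have main: "\<forall>nu T2. levy_profile TYPE('a) nu \<longrightarrow> T2 > 0 \<longrightarrow> cond_ii TYPE('a) nu T2 c2 \<beta>2 \<longrightarrow>
         cond_i TYPE('a) nu (ereal \<rho> * T2) c1"
  proof (intro allI impI)
    fix nu T2 assume L: "levy_profile TYPE('a) nu" and T: "T2 > 0" and C: "cond_ii TYPE('a) nu T2 c2 \<beta>2"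
    show "cond_i TYPE('a) nu (ereal \<rho> * T2) c1"
      unfolding cond_i_def
    proof (intro allI impI, elim conjE)
      fix r :: real assume r: "0 < r" "ereal r < ereal \<rho> * T2"
      define R where "R = r / \<rho>"
      have R: "0 < R" "ereal R < T2" "\<rho> * R = r" "r \<le> R"
        unfolding R_def using ereal_lt_div[OF \<rho>(1) T r(2)] r \<rho> by (auto simp: field_simps)
      define ir where "ir = enn2real (Iq TYPE('a) nu r)"
      define iR where "iR = enn2real (Iq TYPE('a) nu R)"
      define nr where "nr = enn2real (nu r)"
      have ir0: "0 \<le> ir" "0 \<le> iR" "0 \<le> nr" unfolding ir_def iR_def nr_def by auto
      have "ennreal (c2 * \<rho> powr \<beta>2) * K0 TYPE('a) nu (\<rho> * R) \<le> K0 TYPE('a) nu R"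
        using C \<rho> R unfolding cond_ii_def by auto
      then have "ennreal (c2 * \<rho> powr \<beta>2) * ennreal (ir / r^2) \<le> ennreal (iR / R^2)"
        unfolding K0_real[OF L] R(3) ir_def iR_def .
      then have "ennreal (c2 * \<rho> powr \<beta>2 * (ir / r^2)) \<le> ennreal (iR / R^2)"
        using c2 ir0 by (simp add: ennreal_mult'[symmetric])
      then have k: "c2 * \<rho> powr \<beta>2 * (ir / r^2) \<le> iR / R^2"
        using ir0 by (simp only: ennreal_le_iff divide_nonneg_nonneg zero_le_power2)
      have rho2: "\<rho>^2 = (c2/2) * \<rho> powr \<beta>2"
      proof -
        have "\<rho>^2 = \<rho> powr (real 2)" using \<rho> by (simp add: powr_realpow)
        also have "\<dots> = \<rho> powr ((2 - \<beta>2) + \<beta>2)" by simp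
        also have "\<dots> = \<rho> powr (2 - \<beta>2) * \<rho> powr \<beta>2" by (rule powr_add)
        finally show ?thesis using \<rho> by simp
      qed
      have "iR / R^2 = iR * \<rho>^2 / r^2" unfolding R_def using \<rho> r by (simp add: field_simps)
      with k have "c2 * \<rho> powr \<beta>2 * ir \<le> iR * \<rho>^2" using r by (simp add: divide_le_cancel)
      then have "c2 * \<rho> powr \<beta>2 * ir \<le> iR * ((c2/2) * \<rho> powr \<beta>2)" unfolding rho2 .
      then have "(c2 * \<rho> powr \<beta>2) * ir \<le> (c2 * \<rho> powr \<beta>2) * (iR / 2)" by (simp add: algebra_simps)
      then have "ir \<le> iR / 2" using c2 \<rho> by (simp add: mult_le_cancel_left_pos)
      then have i2: "2 * ir \<le> iR" by simp
      have e1: "iR = ir + enn2real (ann TYPE('a) nu r R)" using real_bundle(1)[OF L r(1) R(4)] unfolding iR_def ir_def .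
      have e3: "enn2real (ann TYPE('a) nu r R) \<le> R^2 * nr * (V * R ^ d)"
        using real_bundle(3)[OF L r(1) R(4)] unfolding nr_def V_def d_def .
      have "ir \<le> R^2 * nr * (V * R ^ d)" using i2 e1 e3 by linarith
      also have "\<dots> = V * nr * r ^ (d + 2) / \<rho> ^ (d + 2)"
        unfolding R_def using \<rho> by (simp add: field_simps power_add power2_eq_square power_divide)
      finally have "ir * \<rho> ^ (d + 2) \<le> V * nr * r ^ (d + 2)" using \<rho> by (simp add: pos_le_divide_eq)
      moreover have "c1 * r powr (- real d) * (ir / r^2) = ir * \<rho> ^ (d + 2) / (V * r ^ (d + 2))"
        unfolding c1_def using r by (simp add: powr_minus powr_realpow field_simps power_add power2_eq_square)
      ultimately have "c1 * r powr (- real d) * (ir / r^2) \<le> nr"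
      proof -
        assume a1: "ir * \<rho> ^ (d + 2) \<le> V * nr * r ^ (d + 2)"
          and a2: "c1 * r powr (- real d) * (ir / r^2) = ir * \<rho> ^ (d + 2) / (V * r ^ (d + 2))"
        have pos: "0 < V * r ^ (d + 2)" using Vp r by simp
        have "ir * \<rho> ^ (d + 2) \<le> nr * (V * r ^ (d + 2))" using a1 by (simp add: ac_simps)
        then have "ir * \<rho> ^ (d + 2) / (V * r ^ (d + 2)) \<le> nr" using pos by (simp add: pos_divide_le_eq)
        then show ?thesis using a2 by simp
      qed
      then show "ennreal (c1 * r powr (- real DIM('a))) * K0 TYPE('a) nu r \<le> nu r"
        using cond_i_from_real[OF L r(1), of c1] c1 unfolding ir_def nr_def d_def by simp
    qed
  qed
  show ?thesis using main c1 unfolding \<rho>_def by blast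
qed

lemma lborel_scale_nn:
  fixes f :: "'a::euclidean_space \<Rightarrow> ennreal"
  assumes f[measurable]: "f \<in> borel_measurable borel" and c: "0 < c"
  shows "(\<integral>\<^sup>+x. f x \<partial>(lborel::'a measure)) = ennreal (c ^ DIM('a)) * (\<integral>\<^sup>+x. f (c *\<^sub>R x) \<partial>lborel)"
proof -
  have "(\<integral>\<^sup>+x. f x \<partial>(lborel::'a measure)) = (\<integral>\<^sup>+x. f x \<partial>(density (distr lborel borel (\<lambda>x. 0 + c *\<^sub>R x)) (\<lambda>_. \<bar>c\<bar>^DIM('a))))"
    using lborel_affine[of c "0::'a"] c by simp
  also have "\<dots> = (\<integral>\<^sup>+x. \<bar>c\<bar>^DIM('a) * f x \<partial>(distr lborel borel (\<lambda>x. 0 + c *\<^sub>R x)))"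
    by (subst nn_integral_density) auto
  also have "\<dots> = (\<integral>\<^sup>+x. \<bar>c\<bar>^DIM('a) * f (0 + c *\<^sub>R x) \<partial>lborel)"
    by (subst nn_integral_distr) auto
  also have "\<dots> = ennreal (c ^ DIM('a)) * (\<integral>\<^sup>+x. f (c *\<^sub>R x) \<partial>lborel)"
    using c by (subst nn_integral_cmult) (auto simp: ennreal_power)
  finally show ?thesis .
qed

lemma Iq_scale_bound:
  assumes L: "levy_profile TYPE('a::euclidean_space) nu" and C: "cond_iii TYPE('a) nu T c3 \<beta>"
    and \<rho>: "0 < \<rho>" "\<rho> \<le> 1" and r: "0 < r" "ereal r < T" and c3: "0 < c3"
  shows "ennreal (c3 * \<rho> powr (real DIM('a) + \<beta>)) * Iq TYPE('a) nu (\<rho> * r)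
     \<le> ennreal (\<rho> ^ (DIM('a) + 2)) * Iq TYPE('a) nu r"
proof -
  note [measurable] = nu_norm_meas[OF L]
  have [measurable]: "ball (0::'a) (\<rho> * r) \<in> sets borel" "ball (0::'a) r \<in> sets borel" by auto
  define K where "K = c3 * \<rho> powr (real DIM('a) + \<beta>)"
  have K0: "0 \<le> K" unfolding K_def using c3 by simp
  define f where "f x = ennreal (norm x ^ 2) * nu (norm x) * indicator (ball (0::'a) (\<rho> * r)) x" for x
  have fm: "f \<in> borel_measurable borel" unfolding f_def by measurable
  have "Iq TYPE('a) nu (\<rho> * r) = (\<integral>\<^sup>+x. f x \<partial>lborel)" unfolding Iq_def f_def by simp
  also have "\<dots> = ennreal (\<rho> ^ DIM('a)) * (\<integral>\<^sup>+x. f (\<rho> *\<^sub>R x) \<partial>lborel)"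
    by (rule lborel_scale_nn[OF fm \<rho>(1)])
  finally have e: "Iq TYPE('a) nu (\<rho> * r) = ennreal (\<rho> ^ DIM('a)) * (\<integral>\<^sup>+x. f (\<rho> *\<^sub>R x) \<partial>lborel)" .
  have fsm: "(\<lambda>x. f (\<rho> *\<^sub>R x)) \<in> borel_measurable lborel" using fm by measurable
  have gm: "(\<lambda>x::'a. ennreal (norm x ^ 2) * nu (norm x) * indicator (ball 0 r) x) \<in> borel_measurable lborel"
    by measurable
  have pw: "ennreal K * f (\<rho> *\<^sub>R x) \<le> ennreal (\<rho>^2) * (ennreal (norm x ^ 2) * nu (norm x) * indicator (ball 0 r) x)" for x :: 'a
  proof (cases "x = 0")
    case True then show ?thesis by (simp add: f_def)
  next
    case False
    show ?thesis
    proof (cases "x \<in> ball 0 r")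
      case True
      then have xr: "0 < norm x" "norm x < r" using False by auto
      have "ereal (norm x) < T" using xr(2) r(2) by (meson ereal_less_eq(3) le_less_trans less_imp_le)
      then have cc: "ennreal (c3 * \<rho> powr (real DIM('a) + \<beta>)) * nu (\<rho> * norm x) \<le> nu (norm x)"
        using C \<rho> xr unfolding cond_iii_def by blast
      have in1: "\<rho> *\<^sub>R x \<in> ball 0 (\<rho> * r)" using xr \<rho> by simp
      have "ennreal K * f (\<rho> *\<^sub>R x) = ennreal (\<rho>^2 * norm x ^ 2) * (ennreal K * nu (\<rho> * norm x))"
        using in1 \<rho> unfolding f_def by (simp add: power_mult_distrib ac_simps)
      also have "\<dots> \<le> ennreal (\<rho>^2 * norm x ^ 2) * nu (norm x)"
        using cc unfolding K_def by (intro mult_left_mono) auto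
      also have "\<dots> = ennreal (\<rho>^2) * (ennreal (norm x ^ 2) * nu (norm x) * indicator (ball 0 r) x)"
        using True by (simp add: ennreal_mult ac_simps)
      finally show ?thesis .
    next
      case False
      then have "\<rho> *\<^sub>R x \<notin> ball 0 (\<rho> * r)" using \<rho> by simp
      then show ?thesis by (simp add: f_def)
    qed
  qed
  have "ennreal K * Iq TYPE('a) nu (\<rho> * r) = ennreal (\<rho> ^ DIM('a)) * (\<integral>\<^sup>+x. ennreal K * f (\<rho> *\<^sub>R x) \<partial>lborel)"
    unfolding e using fsm by (subst nn_integral_cmult) (auto simp: ac_simps)
  also have "\<dots> \<le> ennreal (\<rho> ^ DIM('a)) * (\<integral>\<^sup>+(x::'a). ennreal (\<rho>^2) * (ennreal (norm x ^ 2) * nu (norm x) * indicator (ball 0 r) x) \<partial>lborel)"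
  proof (rule mult_left_mono)
    show "(\<integral>\<^sup>+x. ennreal K * f (\<rho> *\<^sub>R x) \<partial>lborel) \<le> (\<integral>\<^sup>+(x::'a). ennreal (\<rho>^2) * (ennreal (norm x ^ 2) * nu (norm x) * indicator (ball 0 r) x) \<partial>lborel)"
      by (rule nn_integral_mono) (rule pw)
  qed simp
  also have "\<dots> = ennreal (\<rho> ^ DIM('a)) * (ennreal (\<rho>^2) * Iq TYPE('a) nu r)"
    unfolding Iq_def using gm by (subst nn_integral_cmult) auto
  also have "\<dots> = ennreal (\<rho> ^ (DIM('a) + 2)) * Iq TYPE('a) nu r"
  proof -
    have "ennreal (\<rho> ^ DIM('a)) * ennreal (\<rho>^2) = ennreal (\<rho> ^ (DIM('a) + 2))"
      using \<rho> by (simp add: ennreal_mult'[symmetric] power_add power2_eq_square)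
    then show ?thesis by (simp add: mult.assoc[symmetric])
  qed
  finally show ?thesis unfolding K_def .
qed

lemma part5:
  assumes c3: "0 < c3" "c3 \<le> 1" and b: "0 \<le> \<beta>3" "\<beta>3 < 2"
  shows "\<exists>c1 > 0. (\<forall>nu T3. levy_profile TYPE('a::euclidean_space) nu \<longrightarrow> T3 > 0 \<longrightarrow> cond_iii TYPE('a) nu T3 c3 \<beta>3 \<longrightarrow>
         cond_i TYPE('a) nu T3 c1)"
proof -
  define \<rho> where "\<rho> = (c3 / 2) powr (1 / (2 - \<beta>3))"
  define V where "V = unit_ball_vol (real DIM('a))"
  define d where "d = DIM('a)"
  have \<rho>: "0 < \<rho>" "\<rho> < 1" "\<rho> powr (2 - \<beta>3) = c3 / 2"
    using rho_facts[OF c3, of \<beta>3] b unfolding \<rho>_def by auto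
  have Vp: "V > 0" unfolding V_def by simp
  define K where "K = c3 * \<rho> powr (real d + \<beta>3)"
  have Kp: "K > 0" unfolding K_def using c3 \<rho> by simp
  define c1 where "c1 = K / (2 * V)"
  have c1: "c1 > 0" unfolding c1_def using Kp Vp by simp
  have rd2: "\<rho> ^ (d + 2) = K / 2"
  proof -
    have "\<rho> ^ (d + 2) = \<rho> powr (real (d + 2))" using \<rho> by (intro powr_realpow[symmetric]) auto
    also have "\<dots> = \<rho> powr ((real d + \<beta>3) + (2 - \<beta>3))" by (simp add: add.commute)
    also have "\<dots> = \<rho> powr (real d + \<beta>3) * \<rho> powr (2 - \<beta>3)" by (rule powr_add)
    finally show ?thesis unfolding K_def using \<rho> by simp
  qed
  have main: "\<forall>nu T3. levy_profile TYPE('a) nu \<longrightarrow> T3 > 0 \<longrightarrow> cond_iii TYPE('a) nu T3 c3 \<beta>3 \<longrightarrow>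
         cond_i TYPE('a) nu T3 c1"
  proof (intro allI impI)
    fix nu T3 assume L: "levy_profile TYPE('a) nu" and T: "T3 > 0" and C: "cond_iii TYPE('a) nu T3 c3 \<beta>3"
    show "cond_i TYPE('a) nu T3 c1"
      unfolding cond_i_def
    proof (intro allI impI, elim conjE)
      fix r :: real assume r: "0 < r" "ereal r < T3"
      define ir where "ir = enn2real (Iq TYPE('a) nu r)"
      define ip where "ip = enn2real (Iq TYPE('a) nu (\<rho> * r))"
      define nr where "nr = enn2real (nu r)"
      define np where "np = enn2real (nu (\<rho> * r))"
      have z: "0 \<le> ir" "0 \<le> ip" "0 \<le> nr" "0 \<le> np" unfolding ir_def ip_def nr_def np_def by auto
      have pr: "0 < \<rho> * r" "\<rho> * r \<le> r" using \<rho> r by (auto simp: mult_le_cancel_right1)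
      have "ennreal K * Iq TYPE('a) nu (\<rho> * r) \<le> ennreal (\<rho> ^ (d + 2)) * Iq TYPE('a) nu r"
        using Iq_scale_bound[OF L C \<rho>(1) _ r c3(1)] \<rho> unfolding K_def d_def by simp
      then have "ennreal K * ennreal ip \<le> ennreal (\<rho> ^ (d + 2)) * ennreal ir"
        unfolding ip_def ir_def using Iq_finite[OF L, of r] Iq_finite[OF L, of "\<rho> * r"] by simp
      then have "ennreal (K * ip) \<le> ennreal (\<rho> ^ (d + 2) * ir)"
        using Kp z \<rho> by (simp add: ennreal_mult'[symmetric])
      then have "K * ip \<le> \<rho> ^ (d + 2) * ir" using z \<rho> by (subst (asm) ennreal_le_iff) auto
      then have "K * ip \<le> K * (ir / 2)" unfolding rd2 by simp
      then have ip2: "ip \<le> ir / 2" using Kp by (simp add: mult_le_cancel_left_pos)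
      have "ennreal (c3 * \<rho> powr (real DIM('a) + \<beta>3)) * nu (\<rho> * r) \<le> nu r"
        using C \<rho> r unfolding cond_iii_def by simp
      then have "ennreal K * ennreal np \<le> ennreal nr"
        unfolding K_def d_def np_def nr_def using nu_real[OF L r(1)] nu_real[OF L pr(1)] by simp
      then have "ennreal (K * np) \<le> ennreal nr" using Kp z by (simp add: ennreal_mult'[symmetric])
      then have Kn: "K * np \<le> nr" using z by (simp only: ennreal_le_iff)
      have e1: "ir = ip + enn2real (ann TYPE('a) nu (\<rho> * r) r)"
        using real_bundle(1)[OF L pr] unfolding ir_def ip_def .
      have e3: "enn2real (ann TYPE('a) nu (\<rho> * r) r) \<le> r^2 * np * (V * r ^ d)"
        using real_bundle(3)[OF L pr] unfolding np_def V_def d_def .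
      have "K * (r^2 * np * (V * r ^ d)) = (K * np) * (V * r ^ (d + 2))"
        by (simp add: power_add power2_eq_square ac_simps)
      also have "\<dots> \<le> nr * (V * r ^ (d + 2))" using Kn Vp r by (intro mult_right_mono) auto
      finally have "K * (r^2 * np * (V * r ^ d)) \<le> nr * (V * r ^ (d + 2))" .
      moreover have "K * ir \<le> 2 * (K * (r^2 * np * (V * r ^ d)))"
      proof -
        have "ir \<le> 2 * (r^2 * np * (V * r ^ d))" using e1 e3 ip2 by linarith
        then show ?thesis using Kp by (simp add: mult_left_mono)
      qed
      ultimately have a1: "K * ir \<le> 2 * (nr * (V * r ^ (d + 2)))" by linarith
      have pos: "0 < 2 * V * r ^ (d + 2)" using Vp r by simp
      have a2: "c1 * r powr (- real d) * (ir / r^2) = K * ir / (2 * V * r ^ (d + 2))"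
        unfolding c1_def using r by (simp add: powr_minus powr_realpow field_simps power_add power2_eq_square)
      have "K * ir \<le> nr * (2 * V * r ^ (d + 2))" using a1 by (simp add: ac_simps)
      then have "K * ir / (2 * V * r ^ (d + 2)) \<le> nr" using pos by (simp add: pos_divide_le_eq)
      then have "c1 * r powr (- real d) * (ir / r^2) \<le> nr" using a2 by simp
      then show "ennreal (c1 * r powr (- real DIM('a))) * K0 TYPE('a) nu r \<le> nu r"
        using cond_i_from_real[OF L r(1), of c1] c1 unfolding ir_def nr_def d_def by simp
    qed
  qed
  show ?thesis using main c1 by blast
qed

theorem lemma6p3:
  shows
  "(\<forall>nu. levy_profile TYPE('a::euclidean_space) nu \<longrightarrow>
      ((\<exists>T1 c1. T1 > 0 \<and> c1 > 0 \<and> cond_i TYPE('a) nu T1 c1) \<longleftrightarrow>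
       (\<exists>T2 c2 \<beta>2. T2 > 0 \<and> 0 < c2 \<and> c2 \<le> 1 \<and> 0 < \<beta>2 \<and> \<beta>2 < 2 \<and> cond_ii TYPE('a) nu T2 c2 \<beta>2)) \<and>
      ((\<exists>T1 c1. T1 > 0 \<and> c1 > 0 \<and> cond_i TYPE('a) nu T1 c1) \<longleftrightarrow>
       (\<exists>T3 c3 \<beta>3. T3 > 0 \<and> 0 < c3 \<and> c3 \<le> 1 \<and> 0 \<le> \<beta>3 \<and> \<beta>3 < 2 \<and> cond_iii TYPE('a) nu T3 c3 \<beta>3)))
   \<and>
   (\<forall>c1 > 0. \<exists>\<beta>2. 0 < \<beta>2 \<and> \<beta>2 < 2 \<and>
      (\<forall>nu T1. levy_profile TYPE('a) nu \<longrightarrow> T1 > 0 \<longrightarrow> cond_i TYPE('a) nu T1 c1 \<longrightarrow>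
         cond_ii TYPE('a) nu T1 1 \<beta>2))
   \<and>
   (\<forall>c1 > 0. \<exists>c3 \<beta>3. 0 < c3 \<and> c3 \<le> 1 \<and> 0 \<le> \<beta>3 \<and> \<beta>3 < 2 \<and>
      (\<forall>nu T1. levy_profile TYPE('a) nu \<longrightarrow> T1 > 0 \<longrightarrow> cond_i TYPE('a) nu T1 c1 \<longrightarrow>
         cond_iii TYPE('a) nu T1 c3 \<beta>3))
   \<and>
   (\<forall>c2 \<beta>2. 0 < c2 \<and> c2 \<le> 1 \<and> 0 < \<beta>2 \<and> \<beta>2 < 2 \<longrightarrow> (\<exists>c1 > 0.
      (\<forall>nu T2. levy_profile TYPE('a) nu \<longrightarrow> T2 > 0 \<longrightarrow> cond_ii TYPE('a) nu T2 c2 \<beta>2 \<longrightarrow>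
         cond_i TYPE('a) nu (ereal ((c2 / 2) powr (1 / (2 - \<beta>2))) * T2) c1)))
   \<and>
   (\<forall>c3 \<beta>3. 0 < c3 \<and> c3 \<le> 1 \<and> 0 \<le> \<beta>3 \<and> \<beta>3 < 2 \<longrightarrow> (\<exists>c1 > 0.
      (\<forall>nu T3. levy_profile TYPE('a) nu \<longrightarrow> T3 > 0 \<longrightarrow> cond_iii TYPE('a) nu T3 c3 \<beta>3 \<longrightarrow>
         cond_i TYPE('a) nu T3 c1)))"
  proof -
  have P2: "\<forall>c1 > 0. \<exists>\<beta>2. 0 < \<beta>2 \<and> \<beta>2 < 2 \<and>
      (\<forall>nu T1. levy_profile TYPE('a) nu \<longrightarrow> T1 > 0 \<longrightarrow> cond_i TYPE('a) nu T1 c1 \<longrightarrow>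
         cond_ii TYPE('a) nu T1 1 \<beta>2)"
    using part2 by blast
  have P3: "\<forall>c1 > 0. \<exists>c3 \<beta>3. 0 < c3 \<and> c3 \<le> 1 \<and> 0 \<le> \<beta>3 \<and> \<beta>3 < 2 \<and>
      (\<forall>nu T1. levy_profile TYPE('a) nu \<longrightarrow> T1 > 0 \<longrightarrow> cond_i TYPE('a) nu T1 c1 \<longrightarrow>
         cond_iii TYPE('a) nu T1 c3 \<beta>3)"
    using part3 by blast
  have P4: "\<forall>c2 \<beta>2. 0 < c2 \<and> c2 \<le> 1 \<and> 0 < \<beta>2 \<and> \<beta>2 < 2 \<longrightarrow> (\<exists>c1 > 0.
      (\<forall>nu T2. levy_profile TYPE('a) nu \<longrightarrow> T2 > 0 \<longrightarrow> cond_ii TYPE('a) nu T2 c2 \<beta>2 \<longrightarrow>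
         cond_i TYPE('a) nu (ereal ((c2 / 2) powr (1 / (2 - \<beta>2))) * T2) c1))"
    using part4 by blast
  have P5: "\<forall>c3 \<beta>3. 0 < c3 \<and> c3 \<le> 1 \<and> 0 \<le> \<beta>3 \<and> \<beta>3 < 2 \<longrightarrow> (\<exists>c1 > 0.
      (\<forall>nu T3. levy_profile TYPE('a) nu \<longrightarrow> T3 > 0 \<longrightarrow> cond_iii TYPE('a) nu T3 c3 \<beta>3 \<longrightarrow>
         cond_i TYPE('a) nu T3 c1))"
    using part5 by blast
  have EQ: "(\<forall>nu. levy_profile TYPE('a::euclidean_space) nu \<longrightarrow>
      ((\<exists>T1 c1. T1 > 0 \<and> c1 > 0 \<and> cond_i TYPE('a) nu T1 c1) \<longleftrightarrow>
       (\<exists>T2 c2 \<beta>2. T2 > 0 \<and> 0 < c2 \<and> c2 \<le> 1 \<and> 0 < \<beta>2 \<and> \<beta>2 < 2 \<and> cond_ii TYPE('a) nu T2 c2 \<beta>2)) \<and>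
      ((\<exists>T1 c1. T1 > 0 \<and> c1 > 0 \<and> cond_i TYPE('a) nu T1 c1) \<longleftrightarrow>
       (\<exists>T3 c3 \<beta>3. T3 > 0 \<and> 0 < c3 \<and> c3 \<le> 1 \<and> 0 \<le> \<beta>3 \<and> \<beta>3 < 2 \<and> cond_iii TYPE('a) nu T3 c3 \<beta>3)))"
  proof (intro allI impI conjI iffI)
    fix nu assume L: "levy_profile TYPE('a) nu"
    {
      assume "\<exists>T1 c1. T1 > 0 \<and> c1 > 0 \<and> cond_i TYPE('a) nu T1 c1"
      then obtain T1 c1 where h: "T1 > 0" "c1 > 0" "cond_i TYPE('a) nu T1 c1" by blast
      from P2 h(2) obtain \<beta>2 where b: "0 < \<beta>2" "\<beta>2 < 2"
        "\<forall>nu T1. levy_profile TYPE('a) nu \<longrightarrow> T1 > 0 \<longrightarrow> cond_i TYPE('a) nu T1 c1 \<longrightarrow> cond_ii TYPE('a) nu T1 1 \<beta>2"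
        by blast
      show "\<exists>T2 c2 \<beta>2. T2 > 0 \<and> 0 < c2 \<and> c2 \<le> 1 \<and> 0 < \<beta>2 \<and> \<beta>2 < 2 \<and> cond_ii TYPE('a) nu T2 c2 \<beta>2"
        using b h L by (intro exI[of _ T1] exI[of _ "1::real"] exI[of _ \<beta>2]) auto
    }
    {
      assume "\<exists>T1 c1. T1 > 0 \<and> c1 > 0 \<and> cond_i TYPE('a) nu T1 c1"
      then obtain T1 c1 where h: "T1 > 0" "c1 > 0" "cond_i TYPE('a) nu T1 c1" by blast
      from P3 h(2) obtain c3 \<beta>3 where b: "0 < c3" "c3 \<le> 1" "0 \<le> \<beta>3" "\<beta>3 < 2"
        "\<forall>nu T1. levy_profile TYPE('a) nu \<longrightarrow> T1 > 0 \<longrightarrow> cond_i TYPE('a) nu T1 c1 \<longrightarrow> cond_iii TYPE('a) nu T1 c3 \<beta>3"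
        by blast
      show "\<exists>T3 c3 \<beta>3. T3 > 0 \<and> 0 < c3 \<and> c3 \<le> 1 \<and> 0 \<le> \<beta>3 \<and> \<beta>3 < 2 \<and> cond_iii TYPE('a) nu T3 c3 \<beta>3"
        using b h L by (intro exI[of _ T1] exI[of _ c3] exI[of _ \<beta>3]) auto
    }
    {
      assume "\<exists>T2 c2 \<beta>2. T2 > 0 \<and> 0 < c2 \<and> c2 \<le> 1 \<and> 0 < \<beta>2 \<and> \<beta>2 < 2 \<and> cond_ii TYPE('a) nu T2 c2 \<beta>2"
      then obtain T2 c2 \<beta>2 where h: "T2 > 0" "0 < c2" "c2 \<le> 1" "0 < \<beta>2" "\<beta>2 < 2" "cond_ii TYPE('a) nu T2 c2 \<beta>2"
        by blast
      from P4 h obtain c1 where c1: "c1 > 0"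
        "\<forall>nu T2. levy_profile TYPE('a) nu \<longrightarrow> T2 > 0 \<longrightarrow> cond_ii TYPE('a) nu T2 c2 \<beta>2 \<longrightarrow>
         cond_i TYPE('a) nu (ereal ((c2 / 2) powr (1 / (2 - \<beta>2))) * T2) c1"
        by blast
      have "0 < (c2 / 2) powr (1 / (2 - \<beta>2))" using h by simp
      then have pos: "0 < ereal ((c2 / 2) powr (1 / (2 - \<beta>2))) * T2"
        using h(1) by (cases T2) auto
      show "\<exists>T1 c1. T1 > 0 \<and> c1 > 0 \<and> cond_i TYPE('a) nu T1 c1"
        using c1 h L pos by blast
    }
    {
      assume "\<exists>T3 c3 \<beta>3. T3 > 0 \<and> 0 < c3 \<and> c3 \<le> 1 \<and> 0 \<le> \<beta>3 \<and> \<beta>3 < 2 \<and> cond_iii TYPE('a) nu T3 c3 \<beta>3"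
      then obtain T3 c3 \<beta>3 where h: "T3 > 0" "0 < c3" "c3 \<le> 1" "0 \<le> \<beta>3" "\<beta>3 < 2" "cond_iii TYPE('a) nu T3 c3 \<beta>3"
        by blast
      from P5 h obtain c1 where c1: "c1 > 0"
        "\<forall>nu T3. levy_profile TYPE('a) nu \<longrightarrow> T3 > 0 \<longrightarrow> cond_iii TYPE('a) nu T3 c3 \<beta>3 \<longrightarrow> cond_i TYPE('a) nu T3 c1"
        by blast
      show "\<exists>T1 c1. T1 > 0 \<and> c1 > 0 \<and> cond_i TYPE('a) nu T1 c1"
        using c1 h L by blast
    }
  qed
  show ?thesis using EQ P2 P3 P4 P5 by blast
qed

end
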